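(* Let $\mu$ be a singular cardinal, let $\vec{\mu}=\langle\mu_i:i<\operatorname{cf}(\mu)\rangle$ be an increasing sequence of regular cardinals cofinal in $\mu$, and let $\rho$ be a regular cardinal. Suppose $\vec f=\langle f_\nu:\nu<\rho\rangle$ is a sequence of functions in $\prod_{i<\operatorname{cf}(\mu)}\mu_i$ such that $(\vec\mu,\vec f)$ is a scale of length $\rho$ for $\mu$. Then $\rho\in\operatorname{spec}^*(A)$, where $A=\{\mu_i:i<\operatorname{cf}(\mu)\}$.
   Context: $(\vec\mu,\vec f)$ is a scale of length $\rho$ for $\mu$ if $\vec f$ is increasing and cofinal in $\prod_{i<\operatorname{cf}(\mu)}\mu_i$ modulo the ideal of bounded subsets of $\{\mu_i:i<\operatorname{cf}(\mu)\}$ (i.e., $f<g$ mod this ideal iff $f(\mu_i)<g(\mu_i)$ for all sufficiently large $i$). For a set $A$ of regular cardinals, $\prod A$ is the set of functions on $A$ with $f(a)\in a$; for $\mathcal{G}\subseteq\prod A$, $\operatorname{ub}(\mathcal{G})$ is the set of $a\in A$ with $\{f(a):f\in\mathcal{G}\}$ unbounded in $a$. $\operatorname{spec}^*(A)$ is the set of regular $\lambda$ such that there is $\mathcal{F}\subseteq\prod A$ of size $\lambda$ such that for every $\mathcal{F}_0\subseteq\mathcal{F}$ of size $\lambda$, $\operatorname{ub}(\mathcal{F}_0)$ is unbounded in $\sup(A)$. *)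

theory Defs
  imports Main "HOL-Library.Equipollence" "HOL-Library.FuncSet"
begin

text \<open>Ordinals are modelled as elements of an arbitrary well-ordered type 'o;
  the ordinal x is identified with its initial segment seg x.\<close>

definition seg :: "'o::wellorder \<Rightarrow> 'o set" where
  "seg x = {y. y < x}"

definition is_cardinal :: "'o::wellorder \<Rightarrow> bool" where
  "is_cardinal k \<longleftrightarrow> (\<forall>b<k. \<not> (seg b \<approx> seg k))"

definition cofinal_in :: "'o::wellorder set \<Rightarrow> 'o \<Rightarrow> bool" where
  "cofinal_in X k \<longleftrightarrow> X \<subseteq> seg k \<and> (\<forall>b<k. \<exists>x\<in>X. b \<le> x)"

definition regular_cardinal :: "'o::wellorder \<Rightarrow> bool" where
  "regular_cardinal k \<longleftrightarrow> is_cardinal k \<and> infinite (seg k) \<and>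
     (\<forall>X. cofinal_in X k \<longrightarrow> seg k \<lesssim> X)"

definition singular_cardinal :: "'o::wellorder \<Rightarrow> bool" where
  "singular_cardinal k \<longleftrightarrow> is_cardinal k \<and> infinite (seg k) \<and> \<not> regular_cardinal k"

definition cf :: "'o::wellorder \<Rightarrow> 'o" where
  "cf k = (LEAST t. \<exists>X. cofinal_in X k \<and> X \<approx> seg t)"

text \<open>Eventual domination modulo the ideal of bounded subsets of the index set seg th.\<close>
definition lt_mod_bd :: "'o::wellorder \<Rightarrow> ('o \<Rightarrow> 'o) \<Rightarrow> ('o \<Rightarrow> 'o) \<Rightarrow> bool" where
  "lt_mod_bd th f g \<longleftrightarrow> (\<exists>j<th. \<forall>i. j \<le> i \<and> i < th \<longrightarrow> f i < g i)"

definition prod_seq :: "'o::wellorder \<Rightarrow> ('o \<Rightarrow> 'o) \<Rightarrow> ('o \<Rightarrow> 'o) set" where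
  "prod_seq th m = Pi\<^sub>E (seg th) (\<lambda>i. seg (m i))"

definition is_scale :: "'o::wellorder \<Rightarrow> ('o \<Rightarrow> 'o) \<Rightarrow> 'o \<Rightarrow> ('o \<Rightarrow> 'o \<Rightarrow> 'o) \<Rightarrow> bool" where
  "is_scale mu m rho fs \<longleftrightarrow>
     (\<forall>v<rho. fs v \<in> prod_seq (cf mu) m) \<and>
     (\<forall>v w. v < w \<and> w < rho \<longrightarrow> lt_mod_bd (cf mu) (fs v) (fs w)) \<and>
     (\<forall>g\<in>prod_seq (cf mu) m. \<exists>v<rho. lt_mod_bd (cf mu) g (fs v))"

definition prodA :: "'o::wellorder set \<Rightarrow> ('o \<Rightarrow> 'o) set" where
  "prodA A = Pi\<^sub>E A seg"

definition ub :: "('o::wellorder \<Rightarrow> 'o) set \<Rightarrow> 'o set \<Rightarrow> 'o set" where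
  "ub G A = {a\<in>A. \<forall>b<a. \<exists>f\<in>G. b \<le> f a}"

definition unbounded_in_sup :: "'o::wellorder set \<Rightarrow> 'o set \<Rightarrow> bool" where
  "unbounded_in_sup X A \<longleftrightarrow> (\<forall>b. (\<exists>a\<in>A. b < a) \<longrightarrow> (\<exists>x\<in>X. b \<le> x))"

definition spec_star :: "'o::wellorder set \<Rightarrow> 'o set" where
  "spec_star A = {l. regular_cardinal l \<and>
     (\<exists>F. F \<subseteq> prodA A \<and> F \<approx> seg l \<and>
        (\<forall>F0. F0 \<subseteq> F \<and> F0 \<approx> seg l \<longrightarrow> unbounded_in_sup (ub F0 A) A))}"

end

theory Submission
  imports Defs
begin

theorem lemma5p5:
  fixes mu rho :: "'o::wellorder" and m :: "'o \<Rightarrow> 'o" and fs :: "'o \<Rightarrow> 'o \<Rightarrow> 'o"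
  assumes "singular_cardinal mu"
    and "strict_mono_on (seg (cf mu)) m"
    and "\<forall>i<cf mu. regular_cardinal (m i) \<and> m i < mu"
    and "cofinal_in (m ` seg (cf mu)) mu"
    and "regular_cardinal rho"
    and "is_scale mu m rho fs"
  shows "rho \<in> spec_star (m ` seg (cf mu))"
proof -
  define th where "th = cf mu"
  define A where "A = m ` seg th"
  have injm: "inj_on m (seg th)"
    using assms(2) strict_mono_on_imp_inj_on th_def by blast
  have invm: "\<And>i. i < th \<Longrightarrow> inv_into (seg th) m (m i) = i"
    using injm by (simp add: seg_def)
  have fsP: "\<And>v i. v < rho \<Longrightarrow> i < th \<Longrightarrow> fs v i < m i"
    using assms(6) unfolding is_scale_def prod_seq_def th_def[symmetric]
    by (auto simp: PiE_def Pi_def seg_def)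
  have sc2: "\<And>v w. v < w \<Longrightarrow> w < rho \<Longrightarrow> lt_mod_bd th (fs v) (fs w)"
    using assms(6) unfolding is_scale_def th_def by blast
  have sc3: "\<And>g. g \<in> prod_seq th m \<Longrightarrow> \<exists>v<rho. lt_mod_bd th g (fs v)"
    using assms(6) unfolding is_scale_def th_def by blast
  have nonempty: "\<And>i. i < th \<Longrightarrow> \<exists>y. y < m i"
  proof -
    fix i assume "i < th"
    then have "infinite (seg (m i))" using assms(3) th_def regular_cardinal_def by blast
    then have "seg (m i) \<noteq> {}" by force
    then show "\<exists>y. y < m i" by (auto simp: seg_def)
  qed
  define g where "g v = (\<lambda>a. if a \<in> A then fs v (inv_into (seg th) m a) else undefined)" for v
  have gm: "\<And>v i. i < th \<Longrightarrow> g v (m i) = fs v i"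
    using invm by (auto simp: g_def A_def seg_def)
  define F where "F = g ` seg rho"
  have FA: "F \<subseteq> prodA A"
  proof
    fix f assume "f \<in> F"
    then obtain v where v: "v < rho" "f = g v" by (auto simp: F_def seg_def)
    show "f \<in> prodA A"
      unfolding prodA_def
    proof (rule PiE_I)
      fix a assume "a \<in> A"
      then obtain i where "i < th" "a = m i" by (auto simp: A_def seg_def)
      then show "f a \<in> seg a" using v gm fsP by (auto simp: seg_def)
    next
      fix a assume "a \<notin> A" then show "f a = undefined" using v by (simp add: g_def)
    qed
  qed
  have ginj: "inj_on g (seg rho)"
  proof -
    have "g v \<noteq> g w" if vw: "v < w" "w < rho" for v w
    proof -
      obtain j where j: "j < th" "\<forall>i. j \<le> i \<and> i < th \<longrightarrow> fs v i < fs w i"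
        using sc2[OF vw] unfolding lt_mod_bd_def by blast
      then have "fs v j \<noteq> fs w j" by auto
      then show ?thesis using gm[OF j(1)] by metis
    qed
    then show ?thesis unfolding inj_on_def seg_def
      by (metis linorder_neqE mem_Collect_eq)
  qed
  have Feq: "F \<approx> seg rho"
    using ginj unfolding F_def by (meson bij_betw_imp_inj_on eqpoll_def eqpoll_sym inj_on_imp_bij_betw)
  have main: "unbounded_in_sup (ub F0 A) A" if F0: "F0 \<subseteq> F" "F0 \<approx> seg rho" for F0
  proof -
    define I where "I = {v. v < rho \<and> g v \<in> F0}"
    have "g ` I = F0" using F0(1) unfolding I_def F_def seg_def by auto
    moreover have "inj_on g I" using ginj by (rule inj_on_subset) (auto simp: I_def seg_def)
    ultimately have "I \<approx> F0" unfolding eqpoll_def by (metis inj_on_imp_bij_betw)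
    then have Ieq: "I \<approx> seg rho" using F0(2) eqpoll_trans by blast
    have cof: "\<exists>w\<in>I. v \<le> w" if "v < rho" for v
    proof (rule ccontr)
      assume "\<not> ?thesis"
      then have "I \<subseteq> seg v" by (auto simp: seg_def)
      then have "seg rho \<lesssim> seg v"
        using Ieq eqpoll_sym lepoll_trans1 subset_imp_lepoll by blast
      moreover have "seg v \<lesssim> seg rho" using that
        by (intro subset_imp_lepoll) (auto simp: seg_def)
      ultimately have "seg v \<approx> seg rho" by (simp add: lepoll_antisym)
      then show False using that assms(5) unfolding regular_cardinal_def is_cardinal_def by blast
    qed
    show ?thesis
      unfolding unbounded_in_sup_def
    proof (intro allI impI, rule ccontr)
      fix b assume "\<exists>a\<in>A. b < a" and nb: "\<not> (\<exists>x\<in>ub F0 A. b \<le> x)"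
      then obtain i0 where i0: "i0 < th" "b < m i0" by (auto simp: A_def seg_def)
      have "\<exists>c<a. \<forall>f\<in>F0. f a < c" if "a \<in> A" "b \<le> a" for a
        using nb that unfolding ub_def by (auto simp: not_le)
      then obtain c where c: "\<And>a. a \<in> A \<Longrightarrow> b \<le> a \<Longrightarrow> c a < a \<and> (\<forall>f\<in>F0. f a < c a)"
        by metis
      define h where "h = (\<lambda>i. if i < th then (if b \<le> m i then c (m i) else (SOME y. y < m i)) else undefined)"
      have "h \<in> prod_seq th m"
        unfolding prod_seq_def
      proof (rule PiE_I)
        fix i assume "i \<in> seg th"
        then have i: "i < th" by (simp add: seg_def)
        then have mA: "m i \<in> A" by (auto simp: A_def seg_def)
        show "h i \<in> seg (m i)"
        proof (cases "b \<le> m i")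
          case True then show ?thesis using c[OF mA] i by (simp add: h_def seg_def)
        next
          case False then show ?thesis using i someI_ex[OF nonempty[OF i]] by (simp add: h_def seg_def)
        qed
      next
        fix i assume "i \<notin> seg th" then show "h i = undefined" by (simp add: h_def seg_def)
      qed
      then obtain v where v: "v < rho" "lt_mod_bd th h (fs v)" using sc3 by blast
      obtain w where w: "w \<in> I" "v \<le> w" using cof[OF v(1)] by blast
      have wr: "w < rho" "g w \<in> F0" using w(1) by (auto simp: I_def)
      obtain j1 where j1: "j1 < th" "\<forall>i. j1 \<le> i \<and> i < th \<longrightarrow> h i < fs v i"
        using v(2) unfolding lt_mod_bd_def by blast
      obtain j2 where j2: "j2 < th" "\<forall>i. j2 \<le> i \<and> i < th \<longrightarrow> fs v i \<le> fs w i"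
      proof (cases "v = w")
        case True then show ?thesis using that[of j1] j1 by auto
      next
        case False then have "v < w" using w(2) by simp
        then show ?thesis using sc2[OF _ wr(1)] that unfolding lt_mod_bd_def
          by (meson less_imp_le)
      qed
      define i where "i = max i0 (max j1 j2)"
      have i: "i < th" "i0 \<le> i" "j1 \<le> i" "j2 \<le> i" using i0 j1 j2 by (auto simp: i_def max_def)
      have "m i0 \<le> m i"
        using assms(2) i unfolding th_def[symmetric]
        by (metis i0(1) mem_Collect_eq order_le_less seg_def strict_mono_onD)
      then have bm: "b \<le> m i" using i0 by simp
      have mA: "m i \<in> A" using i by (auto simp: A_def seg_def)
      have "h i < fs w i" using j1 j2 i by (meson order_less_le_trans)
      moreover have "h i = c (m i)" using i bm by (simp add: h_def)
      moreover have "g w (m i) < c (m i)" using c[OF mA bm] wr by blast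
      ultimately show False using gm[OF i(1)] by simp
    qed
  qed
  show ?thesis
    unfolding spec_star_def A_def[symmetric] th_def[symmetric]
    using assms(5) FA Feq main by blast
qed

end
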